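(* Let $G$ be a finite, simple, connected graph and let $k\geq 3$ be an integer. Then $$\gamma_{B_k}(G)=\min\{\gamma_{B_k}(T)\colon T \text{ is a spanning tree of } G\}.$$
   Context: $d(u,v)$ denotes the distance in the graph. For a connected graph $G$ and an integer $k\ge 1$, a function $f\colon V(G)\to\{0,1,\dots,k\}$ is a dominating $k$-broadcast on $G$ if for every $u\in V(G)$ there is a vertex $v$ with $f(v)\geq 1$ and $d(u,v)\leq f(v)$. Its cost is $\omega(f)=\sum_{u\in V(G)}f(u)$, and the dominating $k$-broadcast number $\gamma_{B_k}(G)$ is the minimum cost of a dominating $k$-broadcast on $G$. *)

theory Defs
  imports Main
begin

definition simple_graph :: "'a set \<Rightarrow> 'a set set \<Rightarrow> bool" where
  "simple_graph V E \<longleftrightarrow> finite V \<and>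
     (\<forall>e\<in>E. \<exists>u v. u \<noteq> v \<and> u \<in> V \<and> v \<in> V \<and> e = {u, v})"

definition walk :: "'a set set \<Rightarrow> 'a list \<Rightarrow> bool" where
  "walk E xs \<longleftrightarrow> xs \<noteq> [] \<and> (\<forall>i. Suc i < length xs \<longrightarrow> {xs ! i, xs ! Suc i} \<in> E)"

definition connected_graph :: "'a set \<Rightarrow> 'a set set \<Rightarrow> bool" where
  "connected_graph V E \<longleftrightarrow> V \<noteq> {} \<and>
     (\<forall>u\<in>V. \<forall>v\<in>V. \<exists>xs. walk E xs \<and> hd xs = u \<and> last xs = v)"

definition dist :: "'a set set \<Rightarrow> 'a \<Rightarrow> 'a \<Rightarrow> nat" where
  "dist E u v = (LEAST n. \<exists>xs. walk E xs \<and> hd xs = u \<and> last xs = v \<and> length xs = Suc n)"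

definition is_cycle :: "'a set set \<Rightarrow> 'a list \<Rightarrow> bool" where
  "is_cycle E xs \<longleftrightarrow> length xs \<ge> 3 \<and> distinct xs \<and> walk E xs \<and> {last xs, hd xs} \<in> E"

definition acyclic_graph :: "'a set set \<Rightarrow> bool" where
  "acyclic_graph E \<longleftrightarrow> (\<nexists>xs. is_cycle E xs)"

definition is_tree :: "'a set \<Rightarrow> 'a set set \<Rightarrow> bool" where
  "is_tree V E \<longleftrightarrow> simple_graph V E \<and> connected_graph V E \<and> acyclic_graph E"

definition spanning_tree :: "'a set \<Rightarrow> 'a set set \<Rightarrow> 'a set set \<Rightarrow> bool" where
  "spanning_tree V E F \<longleftrightarrow> F \<subseteq> E \<and> is_tree V F"

definition dom_broadcast :: "'a set \<Rightarrow> 'a set set \<Rightarrow> nat \<Rightarrow> ('a \<Rightarrow> nat) \<Rightarrow> bool" where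
  "dom_broadcast V E k f \<longleftrightarrow> (\<forall>v\<in>V. f v \<le> k) \<and>
     (\<forall>u\<in>V. \<exists>v\<in>V. f v \<ge> 1 \<and> dist E u v \<le> f v)"

definition broadcast_cost :: "'a set \<Rightarrow> ('a \<Rightarrow> nat) \<Rightarrow> nat" where
  "broadcast_cost V f = (\<Sum>v\<in>V. f v)"

definition gamma_Bk :: "'a set \<Rightarrow> 'a set set \<Rightarrow> nat \<Rightarrow> nat" where
  "gamma_Bk V E k = Min {broadcast_cost V f | f. dom_broadcast V E k f}"

end

theory Submission
  imports Defs
begin

lemma walk_single[simp]: "walk E [x]"
  by (simp add: walk_def)

lemma walk_Cons2: "walk E (x # y # ys) \<longleftrightarrow> {x,y} \<in> E \<and> walk E (y # ys)"
proof
  assume "walk E (x # y # ys)"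
  then have h: "\<And>i. Suc i < length (x#y#ys) \<Longrightarrow> {(x#y#ys)!i, (x#y#ys)!Suc i} \<in> E"
    unfolding walk_def by blast
  have "{x,y} \<in> E" using h[of 0] by simp
  moreover have "walk E (y # ys)" unfolding walk_def
  proof (intro conjI allI impI)
    fix i assume "Suc i < length (y # ys)"
    then show "{(y # ys) ! i, (y # ys) ! Suc i} \<in> E" using h[of "Suc i"] by simp
  qed simp
  ultimately show "{x,y} \<in> E \<and> walk E (y # ys)" by simp
next
  assume a: "{x,y} \<in> E \<and> walk E (y # ys)"
  show "walk E (x # y # ys)"
    unfolding walk_def
  proof (intro conjI allI impI)
    fix i assume "Suc i < length (x # y # ys)"
    then show "{(x # y # ys) ! i, (x # y # ys) ! Suc i} \<in> E"
      using a unfolding walk_def by (cases i) auto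
  qed simp
qed

lemma walk_Cons: "walk E xs \<Longrightarrow> {x, hd xs} \<in> E \<Longrightarrow> walk E (x # xs)"
  by (cases xs) (simp add: walk_def, simp add: walk_Cons2)

lemma walk_mono: "walk F xs \<Longrightarrow> F \<subseteq> E \<Longrightarrow> walk E xs"
  by (auto simp: walk_def)

lemma walk_rtranclp: "walk E xs \<Longrightarrow> (\<lambda>a b. {a,b} \<in> E)\<^sup>*\<^sup>* (hd xs) (last xs)"
proof (induction xs)
  case Nil then show ?case by (simp add: walk_def)
next
  case (Cons x xs)
  show ?case
  proof (cases xs)
    case Nil then show ?thesis by simp
  next
    case (Cons y ys)
    note yy = this
    have "{x,y} \<in> E" "walk E xs" using Cons.prems yy by (simp_all add: walk_Cons2)
    then show ?thesis using Cons.IH yy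
      by (auto intro: converse_rtranclp_into_rtranclp)
  qed
qed

lemma rtranclp_walk: "(\<lambda>a b. {a,b} \<in> E)\<^sup>*\<^sup>* a b \<Longrightarrow> \<exists>xs. walk E xs \<and> hd xs = a \<and> last xs = b"
proof (induction rule: converse_rtranclp_induct)
  case base then show ?case by (intro exI[of _ "[b]"]) simp
next
  case (step y z)
  then obtain xs where "walk E xs" "hd xs = z" "last xs = b" by blast
  moreover have "xs \<noteq> []" using \<open>walk E xs\<close> by (simp add: walk_def)
  ultimately show ?case using step(1)
    by (intro exI[of _ "y # xs"]) (auto intro: walk_Cons)
qed

lemma rtranclp_adj_sym: "(\<lambda>a b. {a,b} \<in> E)\<^sup>*\<^sup>* a b \<Longrightarrow> (\<lambda>a b. {a,b} \<in> E)\<^sup>*\<^sup>* b a"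
proof (induction rule: rtranclp_induct)
  case base then show ?case by simp
next
  case (step y z)
  have "{z,y} \<in> E" using step(2) by (simp add: insert_commute)
  then show ?case using step(3) by (auto intro: converse_rtranclp_into_rtranclp)
qed

lemma dist_le: "walk E xs \<Longrightarrow> hd xs = u \<Longrightarrow> last xs = v \<Longrightarrow> dist E u v \<le> length xs - 1"
  unfolding dist_def
  apply (rule Least_le)
  apply (rule exI[of _ xs])
  apply (auto simp: walk_def)
  done

lemma dist_self: "dist E u u = 0"
  using dist_le[of E "[u]" u u] by simp

lemma dist_walk:
  assumes "connected_graph V E" "u \<in> V" "v \<in> V"
  shows "\<exists>xs. walk E xs \<and> hd xs = u \<and> last xs = v \<and> length xs = Suc (dist E u v)"
proof -
  obtain xs where xs: "walk E xs" "hd xs = u" "last xs = v"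
    using assms unfolding connected_graph_def by blast
  then have "\<exists>n. \<exists>xs. walk E xs \<and> hd xs = u \<and> last xs = v \<and> length xs = Suc n"
    by (intro exI[of _ "length xs - 1"] exI[of _ xs]) (auto simp: walk_def)
  then show ?thesis unfolding dist_def by (rule LeastI_ex)
qed

lemma dist_zero:
  assumes "connected_graph V E" "u \<in> V" "v \<in> V" "dist E u v = 0"
  shows "u = v"
proof -
  obtain xs where "walk E xs \<and> hd xs = u \<and> last xs = v \<and> length xs = Suc 0"
    using dist_walk[OF assms(1-3)] assms(4) by auto
  then show ?thesis by (cases xs) auto
qed

lemma dist_geo:
  assumes "connected_graph V E" "u \<in> V" "v \<in> V" "dist E u v = Suc d"
  shows "\<exists>w. {u,w} \<in> E \<and> dist E w v \<le> d"
proof -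
  obtain xs where xs: "walk E xs" "hd xs = u" "last xs = v" "length xs = Suc (Suc d)"
    using dist_walk[OF assms(1-3)] assms(4) by auto
  then obtain w ys where "xs = u # w # ys"
    by (cases xs; cases "tl xs") auto
  with xs show ?thesis
    using dist_le[of E "w # ys" w v] by (auto simp: walk_Cons2)
qed

lemma dist_mono:
  assumes "F \<subseteq> E" "connected_graph V F" "u \<in> V" "v \<in> V"
  shows "dist E u v \<le> dist F u v"
proof -
  obtain xs where "walk F xs" "hd xs = u" "last xs = v" "length xs = Suc (dist F u v)"
    using dist_walk[OF assms(2-4)] by auto
  then show ?thesis using dist_le[of E xs u v] walk_mono[OF _ assms(1)] by auto
qed

lemma simple_edge: "simple_graph V E \<Longrightarrow> {x,y} \<in> E \<Longrightarrow> x \<in> V \<and> y \<in> V"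
  unfolding simple_graph_def by (auto simp: doubleton_eq_iff)

lemma simple_finite: "simple_graph V E \<Longrightarrow> finite E"
proof -
  assume s: "simple_graph V E"
  then have "E \<subseteq> Pow V" unfolding simple_graph_def by auto
  moreover have "finite V" using s simple_graph_def by auto
  ultimately show ?thesis by (meson finite_Pow_iff finite_subset)
qed

lemma mod_Suc_lt: "j < (n::nat) \<Longrightarrow> (j+1) mod n = (if j+1 = n then 0 else j+1)"
  by auto

lemma mod_lt2: "x < 2*(n::nat) \<Longrightarrow> x mod n = (if x < n then x else x - n)"
  by (simp add: le_mod_geq)

lemma mod_arith:
  assumes "(n::nat) \<ge> 3" "j < n" "Suc (Suc j mod n) mod n = j"
  shows False
proof (cases "Suc j < n")
  case True
  then have "Suc (Suc j) mod n = j" using assms by simp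
  then show False using True assms
    by (cases "Suc (Suc j) < n") (auto simp: le_mod_geq)
next
  case False
  then have "Suc j = n" using assms by simp
  then show False using assms by simp
qed

lemma mod_arith2:
  assumes "(i+1) mod n = (i + (n - 1)) mod n" "i < n" "(n::nat) \<ge> 3"
  shows False
proof (cases "i = 0")
  case True
  then show False using assms by simp
next
  case False
  then have "(i + (n - 1)) mod n = i - 1" using assms
    by (simp add: le_mod_geq)
  then show False using assms
    by (cases "i + 1 < n") (auto simp: le_mod_geq)
qed

lemma cyc_edge:
  assumes "is_cycle E xs" "i < length xs"
  shows "{xs!i, xs!((i+1) mod length xs)} \<in> E"
proof (cases "i+1 = length xs")
  case True
  have "xs \<noteq> []" using assms by auto
  have "i = length xs - 1" using True by simp
  then have "xs!i = last xs" "xs!0 = hd xs" using \<open>xs \<noteq> []\<close> by (auto simp: last_conv_nth hd_conv_nth)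
  then show ?thesis using assms True unfolding is_cycle_def by simp
next
  case False
  then show ?thesis using assms unfolding is_cycle_def walk_def by simp
qed

lemma cyc_from_edges:
  assumes "length xs \<ge> 3" "distinct xs" "\<forall>i<length xs. {xs!i, xs!((i+1) mod length xs)} \<in> E"
  shows "is_cycle E xs"
proof -
  have ne: "xs \<noteq> []" using assms by auto
  have "walk E xs" unfolding walk_def
  proof (intro conjI allI impI ne)
    fix i assume "Suc i < length xs"
    then show "{xs ! i, xs ! Suc i} \<in> E" using assms(3)[rule_format, of i] by simp
  qed
  moreover have "{last xs, hd xs} \<in> E"
    using assms(3)[rule_format, of "length xs - 1"] ne
    by (simp add: last_conv_nth hd_conv_nth)
  ultimately show ?thesis using assms unfolding is_cycle_def by simp
qed

lemma cyc_unique: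
  assumes "distinct xs" "length xs \<ge> 3" "i < length xs" "j < length xs"
    "{xs!i, xs!((i+1) mod length xs)} = {xs!j, xs!((j+1) mod length xs)}"
  shows "i = j"
proof -
  let ?n = "length xs"
  have "0 < ?n" using assms(2) by linarith
  then have lt: "(i+1) mod ?n < ?n" "(j+1) mod ?n < ?n" by simp_all
  from assms(5) consider "xs!i = xs!j" | "xs!i = xs!((j+1) mod ?n) \<and> xs!((i+1) mod ?n) = xs!j"
    by (auto simp: doubleton_eq_iff)
  then show ?thesis
  proof cases
    case 1 then show ?thesis using assms nth_eq_iff_index_eq by blast
  next
    case 2
    then have "i = (j+1) mod ?n" "(i+1) mod ?n = j"
      using assms lt nth_eq_iff_index_eq by blast+
    then have "Suc (Suc j mod ?n) mod ?n = j" by simp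
    then show ?thesis using assms(2,4) mod_arith by blast
  qed
qed

lemma cross_edge:
  assumes "(\<lambda>a b. {a,b} \<in> E)\<^sup>*\<^sup>* u v" "\<not> (\<lambda>a b. {a,b} \<in> F)\<^sup>*\<^sup>* u v"
  shows "\<exists>a b. {a,b} \<in> E \<and> (\<lambda>a b. {a,b} \<in> F)\<^sup>*\<^sup>* u a \<and> \<not> (\<lambda>a b. {a,b} \<in> F)\<^sup>*\<^sup>* u b"
  using assms
proof (induction rule: rtranclp_induct)
  case base then show ?case by simp
next
  case (step y z)
  show ?case
  proof (cases "(\<lambda>a b. {a,b} \<in> F)\<^sup>*\<^sup>* u y")
    case True then show ?thesis using step by blast
  next
    case False then show ?thesis using step by blast
  qed
qed

lemma extend_tree:
  assumes fin: "finite E" and con: "connected_graph V E" and F0E: "F0 \<subseteq> E"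
    and ac0: "acyclic_graph F0"
  shows "\<exists>F. F0 \<subseteq> F \<and> F \<subseteq> E \<and> acyclic_graph F \<and> connected_graph V F"
proof -
  let ?S = "{F. F0 \<subseteq> F \<and> F \<subseteq> E \<and> acyclic_graph F}"
  have inS: "F0 \<in> ?S" using F0E ac0 by auto
  have "?S \<subseteq> Pow E" by auto
  then have finS: "finite ?S" using fin by (meson finite_Pow_iff finite_subset)
  define c where "c = Max (card ` ?S)"
  have "c \<in> card ` ?S" unfolding c_def using finS inS by (intro Max_in) auto
  then obtain F where F: "F \<in> ?S" "card F = c" by auto
  have Fmax: "\<And>G. G \<in> ?S \<Longrightarrow> card G \<le> card F"
    using F(2) finS unfolding c_def by (auto intro: Max_ge)
  let ?R = "(\<lambda>a b. {a,b} \<in> F)\<^sup>*\<^sup>*"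
  have allR: "?R u v" if uv: "u \<in> V" "v \<in> V" for u v
  proof (rule ccontr)
    assume nR: "\<not> ?R u v"
    obtain xs where "walk E xs" "hd xs = u" "last xs = v" using con uv unfolding connected_graph_def by blast
    then have RE: "(\<lambda>a b. {a,b} \<in> E)\<^sup>*\<^sup>* u v" using walk_rtranclp[of E xs] by simp
    obtain a b where ab: "{a,b} \<in> E" "?R u a" "\<not> ?R u b" using cross_edge[OF RE nR] by blast
    have nF: "{a,b} \<notin> F"
    proof
      assume "{a,b} \<in> F"
      then have "?R a b" by (rule r_into_rtranclp)
      then have "?R u b" by (rule rtranclp_trans[OF ab(2)])
      then show False using ab(3) by blast
    qed
    have acG: "acyclic_graph (insert {a,b} F)"
      unfolding acyclic_graph_def
    proof
      assume "\<exists>xs. is_cycle (insert {a,b} F) xs"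
      then obtain xs where cyc: "is_cycle (insert {a,b} F) xs" by blast
      define n where "n = length xs"
      have n3: "n \<ge> 3" and dist: "distinct xs" using cyc unfolding is_cycle_def n_def by auto
      have edG: "\<And>i. i < n \<Longrightarrow> {xs!i, xs!((i+1) mod n)} \<in> insert {a,b} F"
        using cyc_edge[OF cyc] n_def by auto
      have "\<not> is_cycle F xs" using F unfolding acyclic_graph_def by auto
      then obtain j where j: "j < n" "{xs!j, xs!((j+1) mod n)} \<notin> F"
        using cyc_from_edges[of xs F] n3 dist n_def by auto
      then have jab: "{xs!j, xs!((j+1) mod n)} = {a,b}" using edG by auto
      have oth: "\<And>i. i < n \<Longrightarrow> i \<noteq> j \<Longrightarrow> {xs!i, xs!((i+1) mod n)} \<in> F"
      proof -
        fix i assume i: "i < n" "i \<noteq> j"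
        show "{xs!i, xs!((i+1) mod n)} \<in> F"
        proof (rule ccontr)
          assume "{xs!i, xs!((i+1) mod n)} \<notin> F"
          then have "{xs!i, xs!((i+1) mod n)} = {xs!j, xs!((j+1) mod n)}" using edG[OF i(1)] jab by auto
          then show False using cyc_unique[OF dist] n3 i j n_def by auto
        qed
      qed
      have walkR: "m \<le> n - 1 \<Longrightarrow> ?R (xs!((j+1) mod n)) (xs!((j+1+m) mod n))" for m
      proof (induction m)
        case 0 then show ?case by simp
      next
        case (Suc m)
        let ?i = "(j+1+m) mod n"
        have "?i \<noteq> j"
        proof -
          have lt2: "j+1+m < 2*n" using Suc.prems j by simp
          have m1: "m + 1 < n" using Suc.prems n3 by simp
          show ?thesis
          proof (cases "j+1+m < n")
            case True then show ?thesis using mod_lt2[OF lt2] by simp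
          next
            case False then show ?thesis using mod_lt2[OF lt2] m1 by simp
          qed
        qed
        moreover have "?i < n" using n3 by simp
        ultimately have "{xs!?i, xs!((?i+1) mod n)} \<in> F" using oth by blast
        moreover have "(?i+1) mod n = (j+1+Suc m) mod n" by (simp add: mod_Suc_eq)
        ultimately have "{xs!?i, xs!((j+1+Suc m) mod n)} \<in> F" by simp
        moreover have "?R (xs!((j+1) mod n)) (xs!?i)" using Suc by simp
        ultimately show ?case by (simp add: rtranclp.rtrancl_into_rtrancl)
      qed
      have "(j+1+(n-1)) mod n = j" using j n3 by simp
      then have Rj: "?R (xs!((j+1) mod n)) (xs!j)" using walkR[of "n-1"] by simp
      from jab consider "xs!j = a \<and> xs!((j+1) mod n) = b" | "xs!j = b \<and> xs!((j+1) mod n) = a"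
        by (auto simp: doubleton_eq_iff)
      then show False
      proof cases
        case 1
        then have "?R a b" using Rj rtranclp_adj_sym[of F] by simp
        then have "?R u b" by (rule rtranclp_trans[OF ab(2)])
        then show False using ab(3) by blast
      next
        case 2
        then have "?R a b" using Rj by simp
        then have "?R u b" by (rule rtranclp_trans[OF ab(2)])
        then show False using ab(3) by blast
      qed
    qed
    have GS: "insert {a,b} F \<in> ?S" using F ab acG by auto
    have "finite F" using F fin finite_subset by blast
    then have "card (insert {a,b} F) = Suc (card F)" using nF by simp
    moreover have "card (insert {a,b} F) \<le> card F" by (rule Fmax[OF GS])
    ultimately show False by simp
  qed
  have "connected_graph V F"
    unfolding connected_graph_def
  proof (intro conjI ballI)
    show "V \<noteq> {}" using con connected_graph_def by auto
  next
    fix u v assume "u \<in> V" "v \<in> V"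
    then have "?R u v" by (rule allR)
    then show "\<exists>xs. walk F xs \<and> hd xs = u \<and> last xs = v" by (rule rtranclp_walk)
  qed
  then show ?thesis using F by auto
qed


definition mval :: "'a set \<Rightarrow> 'a set set \<Rightarrow> ('a \<Rightarrow> nat) \<Rightarrow> 'a \<Rightarrow> int" where
  "mval V E f u = Max ((\<lambda>v. int (f v) - int (dist E u v)) ` {v\<in>V. 1 \<le> f v})"

lemma mval_ge:
  assumes "finite V" "v \<in> V" "1 \<le> f v"
  shows "int (f v) - int (dist E u v) \<le> mval V E f u"
  unfolding mval_def using assms by (intro Max_ge) auto

lemma mval_attained:
  assumes "finite V" "\<exists>v\<in>V. 1 \<le> f v"
  shows "\<exists>v\<in>V. 1 \<le> f v \<and> mval V E f u = int (f v) - int (dist E u v)"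
proof -
  have "mval V E f u \<in> (\<lambda>v. int (f v) - int (dist E u v)) ` {v\<in>V. 1 \<le> f v}"
    unfolding mval_def using assms by (intro Max_in) auto
  then show ?thesis by auto
qed

lemma exists_tree:
  assumes sg: "simple_graph V E" and con: "connected_graph V E"
    and fd: "dom_broadcast V E k f"
  shows "\<exists>F. spanning_tree V E F \<and> dom_broadcast V F k f"
proof -
  have finV: "finite V" using sg simple_graph_def by auto
  have fk: "\<And>v. v \<in> V \<Longrightarrow> f v \<le> k" using fd unfolding dom_broadcast_def by auto
  have cov: "\<And>u. u \<in> V \<Longrightarrow> \<exists>v\<in>V. 1 \<le> f v \<and> dist E u v \<le> f v"
    using fd unfolding dom_broadcast_def by auto
  have exB: "\<exists>v\<in>V. 1 \<le> f v" using con cov unfolding connected_graph_def by blast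
  let ?m = "mval V E f"
  have mnn: "0 \<le> ?m u" if uV: "u \<in> V" for u
  proof -
    obtain v where "v \<in> V" "1 \<le> f v" "dist E u v \<le> f v" using cov[OF uV] by blast
    then show ?thesis using mval_ge[OF finV, of v f E u] by linarith
  qed
  have mle: "?m u \<le> int k" for u
  proof -
    obtain v where "v \<in> V" "1 \<le> f v" "?m u = int (f v) - int (dist E u v)"
      using mval_attained[OF finV exB] by blast
    then show ?thesis using fk[of v] by linarith
  qed
  define root where "root u \<longleftrightarrow> u \<in> V \<and> 1 \<le> f u \<and> int (f u) = ?m u" for u
  have step: "\<exists>w. {u,w} \<in> E \<and> ?m u + 1 \<le> ?m w" if u: "u \<in> V" "\<not> root u" for u
  proof -
    obtain v where v: "v \<in> V" "1 \<le> f v" "?m u = int (f v) - int (dist E u v)"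
      using mval_attained[OF finV exB] by blast
    have "v \<noteq> u" using v u dist_self[of E u] unfolding root_def by auto
    then have "dist E u v \<noteq> 0" using dist_zero[OF con u(1) v(1)] by auto
    then obtain d where d: "dist E u v = Suc d" by (cases "dist E u v") auto
    obtain w where w: "{u,w} \<in> E" "dist E w v \<le> d" using dist_geo[OF con u(1) v(1) d] by blast
    have "int (f v) - int (dist E w v) \<le> ?m w" by (rule mval_ge[where f=f, OF finV v(1,2)])
    then have "?m u + 1 \<le> ?m w" using v(3) d w(2) by linarith
    then show ?thesis using w(1) by blast
  qed
  define p where "p u = (SOME w. {u,w} \<in> E \<and> ?m u + 1 \<le> ?m w)" for u
  have pp: "{u, p u} \<in> E \<and> ?m u + 1 \<le> ?m (p u)" if "u \<in> V" "\<not> root u" for u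
    unfolding p_def using someI_ex[OF step[OF that]] .
  have pV: "p u \<in> V" if "u \<in> V" "\<not> root u" for u
    using simple_edge[OF sg] pp[OF that] by blast
  define F0 where "F0 = {{u, p u} | u. u \<in> V \<and> \<not> root u}"
  have F0E: "F0 \<subseteq> E" unfolding F0_def using pp by blast
  have F0V: "\<And>x y. {x,y} \<in> F0 \<Longrightarrow> x \<in> V \<and> y \<in> V"
    using F0E simple_edge[OF sg] by blast
  have ac0: "acyclic_graph F0"
    unfolding acyclic_graph_def
  proof
    assume "\<exists>xs. is_cycle F0 xs"
    then obtain xs where cyc: "is_cycle F0 xs" by blast
    define n where "n = length xs"
    have n3: "n \<ge> 3" and dis: "distinct xs" using cyc unfolding is_cycle_def n_def by auto
    have ed: "\<And>i. i < n \<Longrightarrow> {xs!i, xs!((i+1) mod n)} \<in> F0"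
      using cyc_edge[OF cyc] n_def by auto
    have "finite (?m ` set xs)" "set xs \<noteq> {}" using n3 n_def by auto
    then have "Min (?m ` set xs) \<in> ?m ` set xs" by simp
    then obtain x where x: "x \<in> set xs" "?m x = Min (?m ` set xs)" by auto
    then obtain i where i: "i < n" "xs!i = x" by (auto simp: in_set_conv_nth n_def)
    have minx: "\<And>y. y \<in> set xs \<Longrightarrow> ?m x \<le> ?m y"
      using x \<open>finite (?m ` set xs)\<close> by auto
    have nb: "y = p x" if "{x,y} \<in> F0" "y \<in> set xs" for y
    proof -
      have "\<exists>w. {x,y} = {w, p w} \<and> w \<in> V \<and> \<not> root w" using that(1) unfolding F0_def by simp
      then obtain w where w: "{x,y} = {w, p w}" "w \<in> V" "\<not> root w" by blast
      from w(1) consider "x = w \<and> y = p w" | "x = p w \<and> y = w" unfolding doubleton_eq_iff by blast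
      then show ?thesis
      proof cases
        case 1 then show ?thesis by simp
      next
        case 2
        then have "?m y + 1 \<le> ?m x" using pp[OF w(2,3)] by simp
        then show ?thesis using minx[OF that(2)] by simp
      qed
    qed
    have n0: "0 < n" using n3 by simp
    have e1: "{x, xs!((i+1) mod n)} \<in> F0" using ed[OF i(1)] i(2) by simp
    define i' where "i' = (i + (n - 1)) mod n"
    have i'n: "i' < n" unfolding i'_def using n0 by simp
    have "(i' + 1) mod n = i"
    proof -
      have "(i' + 1) mod n = (i + (n - 1) + 1) mod n" unfolding i'_def by (simp add: mod_Suc_eq)
      also have "i + (n - 1) + 1 = i + n" using n0 by simp
      finally show ?thesis using i(1) by simp
    qed
    then have e2: "{xs!i', x} \<in> F0" using ed[OF i'n] i(2) by simp
    then have e2': "{x, xs!i'} \<in> F0" by (simp add: insert_commute)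
    have "xs!((i+1) mod n) = p x" using nb[OF e1] n0 n_def by simp
    moreover have "xs!i' = p x" using nb[OF e2'] i'n n_def by simp
    ultimately have "xs!((i+1) mod n) = xs!i'" by simp
    moreover have l1: "(i+1) mod n < length xs" "i' < length xs" using n0 i'n n_def by simp_all
    ultimately have "(i+1) mod n = i'" using nth_eq_iff_index_eq[OF dis l1] by simp
    then show False using i(1) n3 unfolding i'_def by (rule mod_arith2)
  qed
  have reach: "\<exists>r xs. root r \<and> walk F0 xs \<and> hd xs = u \<and> last xs = r
      \<and> int (length xs) - 1 \<le> ?m r - ?m u" if "u \<in> V" for u
    using that
  proof (induction "nat (int k - ?m u)" arbitrary: u rule: less_induct)
    case less
    show ?case
    proof (cases "root u")
      case True then show ?thesis by (intro exI[of _ u] exI[of _ "[u]"]) simp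
    next
      case False
      let ?w = "p u"
      have w: "{u, ?w} \<in> E" "?m u + 1 \<le> ?m ?w" using pp[OF less.prems False] by auto
      have wV: "?w \<in> V" using pV[OF less.prems False] .
      have "nat (int k - ?m ?w) < nat (int k - ?m u)" using w(2) mle[of ?w] by linarith
      then obtain r xs where r: "root r" "walk F0 xs" "hd xs = ?w" "last xs = r"
        "int (length xs) - 1 \<le> ?m r - ?m ?w"
        using less.hyps[OF _ wV] by blast
      have ne: "xs \<noteq> []" using r(2) walk_def by auto
      have "{u, p u} \<in> F0" unfolding F0_def using less.prems False by (intro CollectI exI[of _ u]) simp
      then have "walk F0 (u # xs)" using walk_Cons[OF r(2)] r(3) by simp
      moreover have "int (length (u # xs)) - 1 \<le> ?m r - ?m u" using r(5) w(2) by simp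
      ultimately show ?thesis using r ne by (intro exI[of _ r] exI[of _ "u # xs"]) simp
    qed
  qed
  obtain F where F: "F0 \<subseteq> F" "F \<subseteq> E" "acyclic_graph F" "connected_graph V F"
    using extend_tree[OF simple_finite[OF sg] con F0E ac0] by blast
  have "simple_graph V F" unfolding simple_graph_def
  proof (intro conjI ballI)
    show "finite V" by (rule finV)
  next
    fix e assume "e \<in> F"
    then have "e \<in> E" using F(2) by blast
    then show "\<exists>u v. u \<noteq> v \<and> u \<in> V \<and> v \<in> V \<and> e = {u, v}"
      using sg unfolding simple_graph_def by blast
  qed
  then have sp: "spanning_tree V E F" using F unfolding spanning_tree_def is_tree_def by simp
  have "dom_broadcast V F k f"
    unfolding dom_broadcast_def
  proof (intro conjI ballI)
    fix v assume "v \<in> V" then show "f v \<le> k" by (rule fk)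
  next
    fix u assume u: "u \<in> V"
    obtain r xs where r: "root r" "walk F0 xs" "hd xs = u" "last xs = r"
        "int (length xs) - 1 \<le> ?m r - ?m u" using reach[OF u] by blast
    have "walk F xs" using walk_mono[OF r(2) F(1)] .
    then have "dist F u r \<le> length xs - 1" using dist_le[OF _ r(3,4)] by blast
    moreover have "xs \<noteq> []" using r(2) walk_def by auto
    ultimately have "dist F u r + 1 \<le> length xs" by (cases xs) auto
    then have "int (dist F u r) + 1 \<le> int (length xs)" by linarith
    then have "int (dist F u r) \<le> ?m r - ?m u" using r(5) by linarith
    then have "dist F u r \<le> f r" using r(1) mnn[OF u] unfolding root_def by linarith
    moreover have "r \<in> V" "1 \<le> f r" using r(1) unfolding root_def by auto
    ultimately show "\<exists>v\<in>V. 1 \<le> f v \<and> dist F u v \<le> f v" by blast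
  qed
  then show ?thesis using sp by blast
qed

lemma cost_finite:
  assumes "finite V"
  shows "finite {broadcast_cost V f | f. dom_broadcast V E k f}"
proof -
  have "{broadcast_cost V f | f. dom_broadcast V E k f} \<subseteq> {..card V * k}"
  proof
    fix c assume "c \<in> {broadcast_cost V f | f. dom_broadcast V E k f}"
    then obtain f where "c = broadcast_cost V f" "dom_broadcast V E k f" by blast
    then have "c \<le> card V * k" unfolding broadcast_cost_def dom_broadcast_def
      using sum_bounded_above[of V f k] by simp
    then show "c \<in> {..card V * k}" by simp
  qed
  then show ?thesis using finite_subset by blast
qed

lemma gamma_le:
  assumes "finite V" "dom_broadcast V E k f"
  shows "gamma_Bk V E k \<le> broadcast_cost V f"
  unfolding gamma_Bk_def using assms cost_finite[OF assms(1)] by (intro Min_le) auto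

lemma gamma_attained:
  assumes "finite V" "1 \<le> k"
  shows "\<exists>f. dom_broadcast V E k f \<and> broadcast_cost V f = gamma_Bk V E k"
proof -
  have "dom_broadcast V E k (\<lambda>_. 1)" unfolding dom_broadcast_def
  proof (intro conjI ballI)
    fix v show "(1::nat) \<le> k" using assms by simp
  next
    fix u assume "u \<in> V"
    then show "\<exists>v\<in>V. (1::nat) \<le> 1 \<and> dist E u v \<le> 1" using dist_self[of E u] by force
  qed
  then have "gamma_Bk V E k \<in> {broadcast_cost V f | f. dom_broadcast V E k f}"
    unfolding gamma_Bk_def using cost_finite[OF assms(1)] by (intro Min_in) auto
  then show ?thesis by auto
qed

theorem theorem2:
  fixes V :: "'a set" and E :: "'a set set" and k :: nat
  assumes "simple_graph V E" and "connected_graph V E" and "k \<ge> 3"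
  shows "gamma_Bk V E k = Min {gamma_Bk V F k | F. spanning_tree V E F}"
proof -
  have finV: "finite V" using assms(1) simple_graph_def by auto
  have k1: "1 \<le> k" using assms(3) by simp
  obtain f where fd: "dom_broadcast V E k f" and fc: "broadcast_cost V f = gamma_Bk V E k"
    using gamma_attained[OF finV k1] by blast
  obtain F where sp: "spanning_tree V E F" and fdF: "dom_broadcast V F k f"
    using exists_tree[OF assms(1,2) fd] by blast
  have le1: "gamma_Bk V F k \<le> gamma_Bk V E k" using gamma_le[OF finV fdF] fc by simp
  have le2: "gamma_Bk V E k \<le> gamma_Bk V F' k" if sp': "spanning_tree V E F'" for F'
  proof -
    obtain g where gd: "dom_broadcast V F' k g" and gc: "broadcast_cost V g = gamma_Bk V F' k"
      using gamma_attained[OF finV k1] by blast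
    have FE: "F' \<subseteq> E" and cF: "connected_graph V F'"
      using sp' unfolding spanning_tree_def is_tree_def by auto
    have "dom_broadcast V E k g"
      unfolding dom_broadcast_def
    proof (intro conjI ballI)
      fix v assume "v \<in> V" then show "g v \<le> k" using gd unfolding dom_broadcast_def by auto
    next
      fix u assume u: "u \<in> V"
      then obtain v where v: "v \<in> V" "1 \<le> g v" "dist F' u v \<le> g v"
        using gd unfolding dom_broadcast_def by auto
      then have "dist E u v \<le> g v" using dist_mono[OF FE cF u v(1)] by linarith
      then show "\<exists>v\<in>V. 1 \<le> g v \<and> dist E u v \<le> g v" using v by blast
    qed
    then show ?thesis using gamma_le[OF finV] gc by metis
  qed
  let ?S = "{gamma_Bk V F k | F. spanning_tree V E F}"
  have "?S = (\<lambda>F. gamma_Bk V F k) ` {F. spanning_tree V E F}" by auto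
  moreover have "{F. spanning_tree V E F} \<subseteq> Pow E" unfolding spanning_tree_def by auto
  ultimately have finS: "finite ?S"
    using simple_finite[OF assms(1)] by (metis finite_Pow_iff finite_imageI finite_subset)
  have "gamma_Bk V E k \<in> ?S" using le1 le2[OF sp] sp by (intro CollectI exI[of _ F]) simp
  moreover have "\<forall>y\<in>?S. gamma_Bk V E k \<le> y" using le2 by blast
  ultimately show ?thesis using finS by (intro Min_eqI[symmetric]) auto
qed

end
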